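(* Let $G=(V,E)$ be a finite connected graph, $p$ a probability vector on $V$ with $p(i)>0$ for all $i$, and consider the Markov chain on $S=(-\mathbb{N}_0)^V$ which moves from $x$ to $T_ix$ with probability $p(i)$, with transition matrix $M$. Then the equation $\pi M=\pi$ has a solution $\pi$ which is a probability distribution on $S$.
   Context: For $x\in S$ and $i\in V$, $T_ix\in S$ is obtained by first setting $x'_i=\max\{x_k:\operatorname{dist}(k,i)\le1\}+1$, $x'_j=x_j$ for $j\ne i$ (dist the graph distance), and then $(T_ix)_j=x'_j-\max_kx'_k$ (height profile after dropping a particle at $i$, seen from the maximum). *)

theory Defs
  imports "HOL-Analysis.Analysis"
begin

text \<open>Vertex set V is the finite type 'v (V = UNIV); the graph is given by a
symmetric irreflexive adjacency relation E. dist(k,i) \<le> 1 iff k = i or E k i.\<close>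

definition state_space :: "('v \<Rightarrow> int) set" where
  "state_space = {x. \<forall>j. x j \<le> 0}"

definition drop_particle ::
  "('v \<Rightarrow> 'v \<Rightarrow> bool) \<Rightarrow> 'v::finite \<Rightarrow> ('v \<Rightarrow> int) \<Rightarrow> ('v \<Rightarrow> int)" where
  "drop_particle E i x =
     (let x' = x(i := Max {x k | k. k = i \<or> E k i} + 1)
      in (\<lambda>j. x' j - Max (range x')))"

definition transition ::
  "('v \<Rightarrow> 'v \<Rightarrow> bool) \<Rightarrow> ('v::finite \<Rightarrow> real) \<Rightarrow> ('v \<Rightarrow> int) \<Rightarrow> ('v \<Rightarrow> int) \<Rightarrow> real" where
  "transition E p x y = (\<Sum>i\<in>{i. drop_particle E i x = y}. p i)"

end

theory Submission
  imports Defs "HOL-Probability.Probability_Mass_Function"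
begin


definition Dp :: "('v \<Rightarrow> 'v \<Rightarrow> bool) \<Rightarrow> 'v::finite \<Rightarrow> ('v \<Rightarrow> int) \<Rightarrow> ('v \<Rightarrow> int)" where
  "Dp E i x = x(i := Max {x k | k. k = i \<or> E k i} + 1)"

definition nrm :: "('v::finite \<Rightarrow> int) \<Rightarrow> ('v \<Rightarrow> int)" where
  "nrm z = (\<lambda>j. z j - Max (range z))"

lemma drop_eq: "drop_particle E i x = nrm (Dp E i x)"
  unfolding drop_particle_def Dp_def nrm_def Let_def by simp

lemma nbhd_img: "{x k | k. k = i \<or> E k i} = x ` {k. k = i \<or> E k i}" by auto

lemma nbhd_fin: "finite {(x::'v::finite\<Rightarrow>int) k | k. k = i \<or> E k i}"
  unfolding nbhd_img by simp

lemma nbhd_ne: "{(x::'v::finite\<Rightarrow>int) k | k. k = i \<or> E k i} \<noteq> {}" by auto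

lemma Max_shift: "finite A \<Longrightarrow> A \<noteq> {} \<Longrightarrow> Max ((\<lambda>t. t - (c::int)) ` A) = Max A - c"
proof -
  assume "finite A" "A \<noteq> {}"
  moreover have "mono (\<lambda>t. t - (c::int))" by (auto simp: mono_def)
  ultimately show ?thesis by (metis (no_types) mono_Max_commute)
qed

lemma Dp_shift: "Dp E i (\<lambda>j. z j - (c::int)) = (\<lambda>j. Dp E i z j - c)"
proof -
  have "{z k - c | k. k = i \<or> E k i} = (\<lambda>t. t - c) ` {z k | k. k = i \<or> E k i}" by auto
  hence "Max {z k - c | k. k = i \<or> E k i} = Max {z k | k. k = i \<or> E k i} - c"
    using Max_shift[OF nbhd_fin[of z i E] nbhd_ne[of z i E], of c] by simp
  thus ?thesis unfolding Dp_def by auto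
qed

lemma nrm_shift: "nrm (\<lambda>j. z j - (c::int)) = nrm (z::'v::finite \<Rightarrow> int)"
proof -
  have "range (\<lambda>j. z j - c) = (\<lambda>t. t - c) ` range z" by auto
  hence "Max (range (\<lambda>j. z j - c)) = Max (range z) - c" using Max_shift[of "range z" c] by simp
  thus ?thesis unfolding nrm_def by auto
qed

lemma drop_nrm: "drop_particle E i (nrm z) = nrm (Dp E i z)"
proof -
  have "Dp E i (nrm z) = (\<lambda>j. Dp E i z j - Max (range z))" unfolding nrm_def by (rule Dp_shift)
  thus ?thesis by (simp add: drop_eq nrm_shift)
qed

lemma fold_nrm: "fold (drop_particle E) l (nrm z) = nrm (fold (Dp E) l z)"
  by (induction l arbitrary: z) (simp_all add: drop_nrm)

lemma fold_drop: "fold (drop_particle E) (i#l) x = nrm (fold (Dp E) (i#l) x)"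
  by (simp add: drop_eq fold_nrm)

lemma drop_in_S: "drop_particle E i x \<in> state_space"
  unfolding drop_eq nrm_def state_space_def by auto

fun chainw :: "('v \<Rightarrow> 'v \<Rightarrow> bool) \<Rightarrow> 'v \<Rightarrow> 'v list \<Rightarrow> bool" where
  "chainw E a [] = True"
| "chainw E a (b#l) = ((a = b \<or> E a b) \<and> chainw E b l)"

lemma chainw_append: "chainw E a (l@m) = (chainw E a l \<and> chainw E (last (a#l)) m)"
  by (induction l arbitrary: a) auto

lemma Dp_ge: "a = i \<or> E a i \<Longrightarrow> x a + 1 \<le> Dp E i (x::'v::finite\<Rightarrow>int) i"
proof -
  assume "a = i \<or> E a i"
  hence "x a \<in> {x k | k. k = i \<or> E k i}" by auto
  hence "x a \<le> Max {x k | k. k = i \<or> E k i}" using nbhd_fin[of x i E] Max_ge by blast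
  thus ?thesis unfolding Dp_def by simp
qed

lemma Dp_eq: "a = i \<or> E a i \<Longrightarrow> \<forall>j. x j \<le> x a \<Longrightarrow> Dp E i (x::'v::finite\<Rightarrow>int) i = x a + 1"
proof -
  assume a: "a = i \<or> E a i" and m: "\<forall>j. x j \<le> x a"
  hence "x a \<in> {x k | k. k = i \<or> E k i}" by auto
  moreover have "\<forall>t\<in>{x k | k. k = i \<or> E k i}. t \<le> x a" using m by auto
  ultimately have "Max {x k | k. k = i \<or> E k i} = x a" using Max_eqI[OF nbhd_fin[of x i E]]
    by blast
  thus ?thesis unfolding Dp_def by simp
qed

lemma phase1: "chainw E a l \<Longrightarrow> a \<in> S \<Longrightarrow> \<forall>j\<in>S. x j \<le> x a \<Longrightarrow>
   \<forall>j\<in>S \<union> set l. fold (Dp E) l (x::'v::finite\<Rightarrow>int) j \<le> fold (Dp E) l x (last (a#l))"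
proof (induction l arbitrary: a x S)
  case Nil thus ?case by simp
next
  case (Cons i l)
  let ?x = "Dp E i x"
  have ai: "a = i \<or> E a i" and ch: "chainw E i l" using Cons.prems by auto
  have ge: "x a + 1 \<le> ?x i" using Dp_ge[of a i E x, OF ai] .
  have "\<forall>j\<in>insert i S. ?x j \<le> ?x i"
  proof
    fix j assume "j \<in> insert i S"
    thus "?x j \<le> ?x i"
    proof
      assume "j \<in> S" thus ?thesis using Cons.prems ge by (cases "j = i") (auto simp: Dp_def)
    qed simp
  qed
  from Cons.IH[OF ch _ this] have "\<forall>j\<in>insert i S \<union> set l. fold (Dp E) l ?x j \<le> fold (Dp E) l ?x (last (i # l))" by simp
  thus ?case by auto
qed

fun Fw :: "'v list \<Rightarrow> 'v \<Rightarrow> int" where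
  "Fw [] j = 0"
| "Fw (b#l) j = (if j \<in> set l then 1 + Fw l j else 1)"

lemma phase2: "chainw E a l \<Longrightarrow> \<forall>j. x j \<le> x a \<Longrightarrow>
   fold (Dp E) l (x::'v::finite\<Rightarrow>int) = (\<lambda>j. if j \<in> set l then x a + Fw l j else x j)"
proof (induction l arbitrary: a x)
  case Nil thus ?case by simp
next
  case (Cons i l)
  let ?x = "Dp E i x"
  have ai: "a = i \<or> E a i" and ch: "chainw E i l" using Cons.prems by auto
  have eq: "?x i = x a + 1" using Dp_eq[of a i E x, OF ai] Cons.prems by simp
  have "\<forall>j. ?x j \<le> ?x i"
  proof
    fix j have "x j \<le> x a" using Cons.prems by blast
    thus "?x j \<le> ?x i" using eq by (cases "j = i") (auto simp: Dp_def)
  qed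
  from Cons.IH[OF ch this] have ih: "fold (Dp E) l ?x = (\<lambda>j. if j \<in> set l then ?x i + Fw l j else ?x j)" .
  have xe: "?x = x(i := x a + 1)" using eq unfolding Dp_def by simp
  have "fold (Dp E) (i#l) x = fold (Dp E) l ?x" by simp
  also have "\<dots> = (\<lambda>j. if j \<in> set l then ?x i + Fw l j else ?x j)" by (rule ih)
  also have "\<dots> = (\<lambda>j. if j \<in> set (i#l) then x a + Fw (i#l) j else x j)"
    unfolding xe by (rule ext) simp
  finally show ?case .
qed



lemma path: "E\<^sup>*\<^sup>* a b \<Longrightarrow> \<exists>l. chainw E a l \<and> last (a#l) = b"
proof (induction rule: rtranclp_induct)
  case base show ?case by (rule exI[of _ "[]"]) simp
next
  case (step b c)
  then obtain l where "chainw E a l" "last (a#l) = b" by blast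
  thus ?case using step by (intro exI[of _ "l@[c]"]) (simp add: chainw_append)
qed

lemma last_app: "last (a # l @ m) = last (last (a#l) # m)"
  by (induction l arbitrary: a) auto

lemma cover:
  assumes conn: "\<And>i j. E\<^sup>*\<^sup>* i j"
  shows "\<exists>l. chainw E r l \<and> set vs \<subseteq> insert r (set l) \<and> last (r#l) = r"
proof (induction vs)
  case Nil show ?case by (rule exI[of _ "[]"]) simp
next
  case (Cons v vs)
  then obtain l where l: "chainw E r l" "set vs \<subseteq> insert r (set l)" "last (r#l) = r" by blast
  obtain p1 where p1: "chainw E r p1" "last (r#p1) = v" using path[OF conn] by blast
  obtain p2 where p2: "chainw E v p2" "last (v#p2) = r" using path[OF conn] by blast
  have "chainw E r (l @ p1 @ p2)"
    using l p1 p2 by (simp add: chainw_append last_app)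
  moreover have "last (r # (l @ p1) @ p2) = r"
    using l p1 p2 by (simp only: last_app)
  moreover have "v \<in> set (r#p1)" using p1(2) by (metis last_in_set list.distinct(1))
  ultimately show ?case using l by (intro exI[of _ "l @ p1 @ p2"]) auto
qed

lemma sync:
  assumes conn: "\<And>i j. E\<^sup>*\<^sup>* i j"
  shows "\<exists>w c. w \<noteq> [] \<and> (\<forall>x. fold (drop_particle E) w (x::'v::finite \<Rightarrow> int) = c)"
proof -
  obtain r :: 'v where True by simp
  obtain vs :: "'v list" where vs: "set vs = UNIV" using finite_list[of "UNIV :: 'v set"] by auto
  obtain l where l: "chainw E r l" "set vs \<subseteq> insert r (set l)" "last (r#l) = r"
    using cover[OF conn] by blast
  define l1 where "l1 = l @ [r]"
  have c1: "chainw E r l1" using l unfolding l1_def by (simp add: chainw_append)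
  have s1: "set l1 = UNIV" using l vs unfolding l1_def by auto
  have la: "last (r#l1) = r" unfolding l1_def by simp
  have ne: "l1 \<noteq> []" unfolding l1_def by simp
  define c where "c = nrm (Fw l1)"
  have "fold (drop_particle E) (l1 @ l1) x = c" for x
  proof -
    obtain i l' where il: "l1 @ l1 = i # l'" using ne by (cases l1) auto
    let ?y = "fold (Dp E) l1 x"
    have "\<forall>j\<in>{r} \<union> set l1. ?y j \<le> ?y (last (r#l1))" by (rule phase1[OF c1]) auto
    hence ym: "\<forall>j. ?y j \<le> ?y r" using s1 la by auto
    have "fold (Dp E) (l1 @ l1) x = fold (Dp E) l1 ?y" by simp
    also have "\<dots> = (\<lambda>j. ?y r + Fw l1 j)" using phase2[OF c1 ym] s1 by simp
    finally have eq: "fold (Dp E) (l1 @ l1) x = (\<lambda>j. Fw l1 j - (- ?y r))" by (simp add: add.commute)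
    have "fold (drop_particle E) (l1 @ l1) x = nrm (fold (Dp E) (l1 @ l1) x)"
      unfolding il by (rule fold_drop)
    also have "\<dots> = c" unfolding eq nrm_shift c_def ..
    finally show ?thesis .
  qed
  thus ?thesis using ne by blast
qed



lemma pmf_bind_bern:
  assumes "0 \<le> b" "b \<le> 1"
  shows "pmf (bind_pmf (bernoulli_pmf b) f) z = pmf (f True) z * b + pmf (f False) z * (1 - b)"
  using assms by (simp add: pmf_bind)

lemma decomp:
  fixes M :: "'b pmf"
  assumes pos: "pmf M w > 0"
  shows "\<exists>C. M = bind_pmf (bernoulli_pmf (pmf M w)) (\<lambda>s. if s then return_pmf w else C)"
proof (cases "pmf M w < 1")
  case True
  have "set_pmf M \<inter> - {w} \<noteq> {}"
  proof
    assume "set_pmf M \<inter> - {w} = {}"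
    hence "set_pmf M \<subseteq> {w}" by auto
    hence "measure M {w} = 1" by (simp add: measure_pmf.prob_eq_1 AE_measure_pmf_iff subset_eq)
    thus False using True by (simp add: measure_pmf_single)
  qed
  hence pc: "pmf (cond_pmf M (- {w})) z = (if z \<in> - {w} then pmf M z / measure M (- {w}) else 0)" for z
    by (rule pmf_cond)
  have mc: "measure M (- {w}) = 1 - pmf M w"
    using measure_pmf.prob_compl[of "{w}" M] by (simp add: measure_pmf_single Compl_eq_Diff_UNIV)
  show ?thesis
  proof (intro exI pmf_eqI)
    fix z
    show "pmf M z = pmf (bind_pmf (bernoulli_pmf (pmf M w)) (\<lambda>s. if s then return_pmf w else cond_pmf M (- {w}))) z"
      using True pos by (subst pmf_bind_bern) (auto simp: pc mc pmf_le_1)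
  qed
next
  case False
  hence one: "pmf M w = 1" using pmf_le_1[of M w] by linarith
  have z0: "pmf M z = 0" if "z \<noteq> w" for z
  proof -
    have "measure M {w, z} = pmf M w + pmf M z" using that
      by (simp add: measure_measure_pmf_finite)
    moreover have "measure M {w,z} \<le> 1" by simp
    ultimately show ?thesis using one pmf_nonneg[of M z] by linarith
  qed
  show ?thesis
  proof (intro exI pmf_eqI)
    fix z
    show "pmf M z = pmf (bind_pmf (bernoulli_pmf (pmf M w)) (\<lambda>s. if s then return_pmf w else M)) z"
      using one z0 by (subst pmf_bind_bern) (auto simp: indicator_def)
  qed
qed

lemma doeblin:
  fixes K :: "'a \<Rightarrow> 'a pmf"
  assumes b: "0 < \<beta>" "\<beta> \<le> 1"
    and K: "\<And>x. K x = bind_pmf (bernoulli_pmf \<beta>) (\<lambda>s. if s then return_pmf c else R x)"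
  shows "\<exists>\<pi>. bind_pmf \<pi> K = \<pi>"
proof -
  define \<mu> where "\<mu> k = ((\<lambda>m. bind_pmf m R) ^^ k) (return_pmf c)" for k
  have \<mu>S: "\<mu> (Suc k) = bind_pmf (\<mu> k) R" for k unfolding \<mu>_def by simp
  have \<mu>0: "\<mu> 0 = return_pmf c" unfolding \<mu>_def by simp
  define \<pi> where "\<pi> = bind_pmf (geometric_pmf \<beta>) \<mu>"
  have "bind_pmf \<pi> K = bind_pmf (geometric_pmf \<beta>) (\<lambda>k. bind_pmf (\<mu> k) K)"
    unfolding \<pi>_def by (simp add: bind_assoc_pmf)
  also have "\<dots> = bind_pmf (geometric_pmf \<beta>) (\<lambda>k. bind_pmf (bernoulli_pmf \<beta>)
       (\<lambda>s. if s then return_pmf c else \<mu> (Suc k)))"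
  proof (rule bind_pmf_cong[OF refl])
    fix k
    have "bind_pmf (\<mu> k) K = bind_pmf (\<mu> k) (\<lambda>x. bind_pmf (bernoulli_pmf \<beta>) (\<lambda>s. if s then return_pmf c else R x))"
      by (rule bind_pmf_cong[OF refl]) (rule K)
    also have "\<dots> = bind_pmf (bernoulli_pmf \<beta>) (\<lambda>s. bind_pmf (\<mu> k) (\<lambda>x. if s then return_pmf c else R x))"
      by (rule bind_commute_pmf)
    also have "\<dots> = bind_pmf (bernoulli_pmf \<beta>) (\<lambda>s. if s then return_pmf c else \<mu> (Suc k))"
      by (rule bind_pmf_cong[OF refl]) (auto simp: \<mu>S)
    finally show "bind_pmf (\<mu> k) K = \<dots>" .
  qed
  also have "\<dots> = bind_pmf (bernoulli_pmf \<beta>) (\<lambda>s. bind_pmf (geometric_pmf \<beta>) (\<lambda>k. if s then return_pmf c else \<mu> (Suc k)))"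
    by (rule bind_commute_pmf)
  also have "\<dots> = bind_pmf (bernoulli_pmf \<beta>) (\<lambda>s. if s then return_pmf c else bind_pmf (geometric_pmf \<beta>) (\<lambda>k. \<mu> (Suc k)))"
    by (rule bind_pmf_cong[OF refl]) auto
  also have "\<dots> = \<pi>"
  proof -
    have "\<pi> = bind_pmf (bind_pmf (bernoulli_pmf \<beta>) (\<lambda>b. if b then return_pmf 0 else map_pmf Suc (geometric_pmf \<beta>))) \<mu>"
      unfolding \<pi>_def using b by (subst geometric_bind_pmf_unfold) auto
    also have "\<dots> = bind_pmf (bernoulli_pmf \<beta>) (\<lambda>s. if s then return_pmf c else bind_pmf (geometric_pmf \<beta>) (\<lambda>k. \<mu> (Suc k)))"
      by (simp add: bind_assoc_pmf bind_return_pmf bind_map_pmf \<mu>0 if_distrib if_distribR cong: if_cong)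
    finally show ?thesis by simp
  qed
  finally show ?thesis by blast
qed

definition kpow :: "('a \<Rightarrow> 'a pmf) \<Rightarrow> nat \<Rightarrow> 'a \<Rightarrow> 'a pmf" where
  "kpow step n x = ((\<lambda>m. bind_pmf m step) ^^ n) (return_pmf x)"

lemma kpow_0: "kpow step 0 x = return_pmf x" by (simp add: kpow_def)
lemma kpow_Suc: "kpow step (Suc n) x = bind_pmf (kpow step n x) step" by (simp add: kpow_def)

lemma kpow_0': "kpow step 0 = return_pmf" by (rule ext) (rule kpow_0)

lemma kpow_Suc': "kpow step (Suc n) = (\<lambda>x. bind_pmf (kpow step n x) step)"
  by (rule ext) (rule kpow_Suc)

lemma average:
  assumes L: "L > 0" and fix0: "bind_pmf \<pi>0 (kpow step L) = \<pi>0"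
  shows "\<exists>\<pi>. bind_pmf \<pi> step = \<pi>"
proof -
  define g where "g j = bind_pmf \<pi>0 (kpow step j)" for j
  define U where "U = pmf_of_set {..<L}"
  define \<pi> where "\<pi> = bind_pmf U g"
  have gS: "bind_pmf (g j) step = g (Suc j)" for j
    unfolding g_def by (simp add: bind_assoc_pmf kpow_Suc')
  have gmod: "g (Suc j) = g (Suc j mod L)" if "j < L" for j
  proof (cases "Suc j = L")
    case True
    hence "g (Suc j) = \<pi>0" using fix0 unfolding g_def by simp
    moreover have "g (Suc j mod L) = \<pi>0" using True unfolding g_def by (simp add: kpow_0' bind_return_pmf')
    ultimately show ?thesis by simp
  next
    case False thus ?thesis using that by simp
  qed
  have Ue: "map_pmf (\<lambda>j. Suc j mod L) U = U"
  proof -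
    have inj: "inj_on (\<lambda>j. Suc j mod L) {..<L}"
      unfolding inj_on_def
    proof (intro ballI impI)
      fix a b assume ab: "a \<in> {..<L}" "b \<in> {..<L}" "Suc a mod L = Suc b mod L"
      thus "a = b" by (cases "Suc a = L"; cases "Suc b = L") auto
    qed
    have "(\<lambda>j. Suc j mod L) ` {..<L} \<subseteq> {..<L}" using L by auto
    hence "(\<lambda>j. Suc j mod L) ` {..<L} = {..<L}" using inj
      by (intro endo_inj_surj) auto
    thus ?thesis unfolding U_def using L by (subst map_pmf_of_set_inj[OF inj]) auto
  qed
  have "bind_pmf \<pi> step = bind_pmf U (\<lambda>j. g (Suc j))"
    unfolding \<pi>_def by (simp add: bind_assoc_pmf gS)
  also have "\<dots> = bind_pmf U (\<lambda>j. g (Suc j mod L))"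
  proof (rule bind_pmf_cong[OF refl])
    fix j assume "j \<in> set_pmf U"
    moreover have "set_pmf U = {..<L}" unfolding U_def using L by (intro set_pmf_of_set) auto
    ultimately have "j < L" by simp
    thus "g (Suc j) = g (Suc j mod L)" by (rule gmod)
  qed
  also have "\<dots> = bind_pmf (map_pmf (\<lambda>j. Suc j mod L) U) g" by (simp add: bind_map_pmf)
  also have "\<dots> = \<pi>" unfolding Ue \<pi>_def ..
  finally show ?thesis by blast
qed

definition blocks :: "'v pmf \<Rightarrow> nat \<Rightarrow> 'v list pmf" where
  "blocks P n = ((\<lambda>m. bind_pmf m (\<lambda>l. map_pmf (\<lambda>i. l@[i]) P)) ^^ n) (return_pmf [])"

lemma kpow_blocks:
  "kpow (\<lambda>x. map_pmf (\<lambda>i. f i x) P) n x = map_pmf (\<lambda>b. fold f b x) (blocks P n)"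
proof (induction n)
  case 0 thus ?case by (simp add: kpow_0 blocks_def)
next
  case (Suc n)
  have "kpow (\<lambda>x. map_pmf (\<lambda>i. f i x) P) (Suc n) x
      = bind_pmf (map_pmf (\<lambda>b. fold f b x) (blocks P n)) (\<lambda>x. map_pmf (\<lambda>i. f i x) P)"
    by (simp add: kpow_Suc Suc)
  also have "\<dots> = map_pmf (\<lambda>b. fold f b x) (blocks P (Suc n))"
    by (simp add: blocks_def bind_map_pmf map_bind_pmf map_pmf_comp)
  finally show ?case .
qed

lemma blocks_set: "set_pmf P = UNIV \<Longrightarrow> length w = n \<Longrightarrow> w \<in> set_pmf (blocks P n)"
proof (induction n arbitrary: w)
  case 0 thus ?case by (simp add: blocks_def)
next
  case (Suc n)
  then obtain u i where w: "w = u @ [i]" by (metis length_Suc_conv_rev)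
  hence "u \<in> set_pmf (blocks P n)" using Suc by simp
  thus ?case using Suc.prems w by (auto simp: blocks_def)
qed



lemma nn_has_sum:
  fixes f :: "'a \<Rightarrow> real"
  assumes nn: "\<And>x. f x \<ge> 0" and I: "(\<integral>\<^sup>+x. ennreal (f x) \<partial>count_space UNIV) = ennreal v" and v: "v \<ge> 0"
  shows "(f has_sum v) UNIV"
proof -
  have int: "integrable (count_space UNIV) f"
    by (rule integrableI_nonneg) (use nn I in auto)
  hence as: "Infinite_Set_Sum.abs_summable_on f UNIV" by (simp add: abs_summable_on_def)
  have "infsetsum f UNIV = enn2real (\<integral>\<^sup>+x. ennreal (f x) \<partial>count_space UNIV)"
    by (rule infsetsum_conv_nn_integral) (use nn I in auto)
  hence e: "infsetsum f UNIV = v" using I v by simp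
  have "infsum f UNIV = v" using infsetsum_infsum[OF as] e by simp
  moreover have "f summable_on UNIV"
    using abs_summable_equivalent[of f UNIV] as abs_summable_summable by blast
  ultimately show ?thesis using has_sum_infsum by blast
qed

theorem mainTheorem4:
  fixes E :: "'v::finite \<Rightarrow> 'v \<Rightarrow> bool" and p :: "'v \<Rightarrow> real"
  assumes sym: "\<And>i j. E i j \<Longrightarrow> E j i"
    and irrefl: "\<And>i. \<not> E i i"
    and connected: "\<And>i j. E\<^sup>*\<^sup>* i j"
    and p_pos: "\<And>i. p i > 0"
    and p_sum: "(\<Sum>i\<in>UNIV. p i) = 1"
  shows "\<exists>\<pi> :: ('v \<Rightarrow> int) \<Rightarrow> real.
           (\<forall>x\<in>state_space. \<pi> x \<ge> 0) \<and>
           (\<pi> has_sum 1) state_space \<and>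
           (\<forall>y\<in>state_space.
              ((\<lambda>x. \<pi> x * transition E p x y) has_sum \<pi> y) state_space)"
proof -
  define P where "P = embed_pmf p"
  have p_nn: "\<And>i. p i \<ge> 0" using p_pos less_imp_le by blast
  have pr: "(\<integral>\<^sup>+x. ennreal (p x) \<partial>count_space UNIV) = 1"
    using p_nn p_sum by (simp add: nn_integral_count_space_finite)
  have pP: "pmf P i = p i" for i unfolding P_def using pmf_embed_pmf[of p i] p_nn pr by blast
  have sP: "set_pmf P = UNIV" using pP p_pos by (auto simp: set_pmf_iff) (metis less_irrefl)
  define step where "step x = map_pmf (\<lambda>i. drop_particle E i x) P" for x
  obtain w c where w: "w \<noteq> []" "\<And>x. fold (drop_particle E) w (x::'v \<Rightarrow> int) = c"
    using sync[OF connected] by blast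
  define L where "L = length w"
  have L: "L > 0" using w unfolding L_def by simp
  have Kb: "kpow step L x = map_pmf (\<lambda>b. fold (drop_particle E) b x) (blocks P L)" for x
    unfolding step_def by (rule kpow_blocks)
  define \<beta> where "\<beta> = pmf (blocks P L) w"
  have b0: "\<beta> > 0" unfolding \<beta>_def L_def by (rule pmf_positive, rule blocks_set[OF sP]) simp
  have b1: "\<beta> \<le> 1" unfolding \<beta>_def by (rule pmf_le_1)
  obtain C where C: "blocks P L = bind_pmf (bernoulli_pmf \<beta>) (\<lambda>s. if s then return_pmf w else C)"
    using decomp[of "blocks P L" w] b0 unfolding \<beta>_def by blast
  have K: "kpow step L x = bind_pmf (bernoulli_pmf \<beta>) (\<lambda>s. if s then return_pmf c else
             map_pmf (\<lambda>b. fold (drop_particle E) b x) C)" for x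
    unfolding Kb C map_bind_pmf
    by (rule bind_pmf_cong[OF refl]) (auto simp: w(2))
  from doeblin[where K="kpow step L", OF b0 b1 K] obtain \<pi>0 where "bind_pmf \<pi>0 (kpow step L) = \<pi>0" by (elim exE)
  from average[OF L this] obtain \<pi> where st: "bind_pmf \<pi> step = \<pi>" by (elim exE)
  have supp: "set_pmf \<pi> \<subseteq> state_space"
  proof -
    have "set_pmf (bind_pmf \<pi> step) \<subseteq> state_space"
      unfolding step_def set_bind_pmf set_map_pmf using drop_in_S by blast
    thus ?thesis using st by simp
  qed
  have out0: "pmf \<pi> x = 0" if "x \<notin> state_space" for x
    using supp that by (meson set_pmf_iff subsetD)
  have tr: "transition E p x y = pmf (step x) y" for x y
  proof -
    have "pmf (step x) y = measure P {i. drop_particle E i x = y}"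
      unfolding step_def pmf_map by (simp add: vimage_def)
    also have "\<dots> = transition E p x y"
      unfolding transition_def by (simp add: measure_measure_pmf_finite pP)
    finally show ?thesis by simp
  qed
  have A: "(pmf \<pi> has_sum 1) state_space"
  proof -
    have "(pmf \<pi> has_sum 1) UNIV"
      by (rule nn_has_sum) (auto simp: nn_integral_pmf)
    thus ?thesis by (subst has_sum_cong_neutral[where T=UNIV and g="pmf \<pi>"]) (auto simp: out0)
  qed
  have B: "((\<lambda>x. pmf \<pi> x * transition E p x y) has_sum pmf \<pi> y) state_space" for y
  proof -
    have "(\<integral>\<^sup>+x. ennreal (pmf \<pi> x * transition E p x y) \<partial>count_space UNIV)
          = (\<integral>\<^sup>+x. ennreal (pmf \<pi> x) * ennreal (pmf (step x) y) \<partial>count_space UNIV)"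
      by (simp add: tr ennreal_mult'')
    also have "\<dots> = (\<integral>\<^sup>+x. ennreal (pmf (step x) y) \<partial>measure_pmf \<pi>)"
      by (simp add: nn_integral_measure_pmf)
    also have "\<dots> = ennreal (pmf (bind_pmf \<pi> step) y)" by (simp add: ennreal_pmf_bind)
    finally have "((\<lambda>x. pmf \<pi> x * transition E p x y) has_sum pmf (bind_pmf \<pi> step) y) UNIV"
      by (intro nn_has_sum) (auto simp: tr)
    hence "((\<lambda>x. pmf \<pi> x * transition E p x y) has_sum pmf \<pi> y) UNIV" using st by simp
    thus ?thesis by (subst has_sum_cong_neutral[where T=UNIV and g="\<lambda>x. pmf \<pi> x * transition E p x y"]) (auto simp: out0)
  qed
  show ?thesis by (intro exI[of _ "pmf \<pi>"] conjI ballI A B pmf_nonneg)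
qed


end
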